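(* Let $G=(V,E,H)$ be a HEDG and $X,Y,Z\subseteq V$. Then the following are equivalent: (i) $X\perp^\sigma_G Y\mid Z$; (ii) $X\perp^\sigma_{G^{\mathrm{aug}}}Y\mid Z$; (iii) $X\perp^d_{G^{\mathrm{acy}}}Y\mid Z$; (iv) $X\perp^d_{G^{\mathrm{acag}}}Y\mid Z$; (v) $X\perp^d_{(G^{\mathrm{aug}})^{\mathrm{acy}}}Y\mid Z$; (vi) $X\perp^d_{(G^{\mathrm{acy}})^{\mathrm{aug}}}Y\mid Z$.
   Context: HEDG $G=(V,E,H)$: $V$ finite, $E\subseteq V\times V$ (self-loops allowed), $H$ a simplicial complex on $V$ (contains singletons, closed under subsets), $\tilde H$ its maximal elements; $v\leftrightarrow w$ for distinct $v,w$ with $\{v,w\}\in H$. $\mathrm{Anc}^G,\mathrm{Desc}^G$ (including the node), $\mathrm{Sc}^G(v)=\mathrm{Anc}^G(v)\cap\mathrm{Desc}^G(v)$. A directed graph is regarded as a HEDG whose hyperedges are only singletons. Augmentation $G^{\mathrm{aug}}$: directed graph on $V\cup\{e_F:F\in\tilde H\}$ with edges $E$ together with $e_F\to v$ for all $v\in F$. Acyclification $G^{\mathrm{acy}}=(V,E^{\mathrm{acy}},H^{\mathrm{acy}})$: $v\to w\in E^{\mathrm{acy}}$ iff $v\notin\mathrm{Sc}^G(w)$ and some $w'\in\mathrm{Sc}^G(w)$ has $(v,w')\in E$; $H^{\mathrm{acy}}=\{F'\subseteq\bigcup_{v\in F}\mathrm{Sc}^G(v):F\in H\}$. $(G^{\mathrm{aug}})^{\mathrm{acy}}$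 is the acyclification of $G^{\mathrm{aug}}$, $(G^{\mathrm{acy}})^{\mathrm{aug}}$ the augmentation of $G^{\mathrm{acy}}$, and $G^{\mathrm{acag}}$ is the directed graph with the node set and directed edges of $(G^{\mathrm{aug}})^{\mathrm{acy}}$ but only singleton hyperedges. Paths: node sequences (repetitions allowed, $n\ge1$) with consecutive nodes joined by $\to,\leftarrow,\leftrightarrow$. d-separation $X\perp^d Y\mid Z$: every path between $X$ and $Y$ is $Z$-blocked, meaning an endnode is in $Z$, or an intermediate collider (both adjacent edges have an arrowhead at it) is not an ancestor of $Z$, or an intermediate non-collider is in $Z$. $\sigma$-separation $X\perp^\sigma Y\mid Z$: every path between $X$ and $Y$ is $Z$-$\sigma$-blocked, meaning an endnode is in $Z$, or an intermediate collider is not an ancestor of $Z$, or an intermediate non-collider $v_i\in Z$ has on the path a directed edge $v_i\to v_{i\pm1}$ pointing to a node outside the strongly connected component of $v_i$. *)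

theory Defs
  imports Main
begin

datatype 'a hedg = HEDG (nodes: "'a set") (dedges: "('a \<times> 'a) set") (hedges: "'a set set")

definition wf_hedg :: "'a hedg \<Rightarrow> bool" where
  "wf_hedg G \<longleftrightarrow> finite (nodes G) \<and> dedges G \<subseteq> nodes G \<times> nodes G
     \<and> hedges G \<subseteq> Pow (nodes G)
     \<and> (\<forall>v\<in>nodes G. {v} \<in> hedges G)
     \<and> (\<forall>F\<in>hedges G. \<forall>F'. F' \<subseteq> F \<longrightarrow> F' \<in> hedges G)"

definition maxhedges :: "'a hedg \<Rightarrow> 'a set set" where
  "maxhedges G = {F \<in> hedges G. \<not> (\<exists>F'\<in>hedges G. F \<subset> F')}"

text \<open>Trivial simplicial complex (only singletons and the empty set): how a directed
  graph is regarded as a HEDG.\<close>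
definition singleton_complex :: "'a set \<Rightarrow> 'a set set" where
  "singleton_complex V = {F. F \<subseteq> V \<and> (\<forall>a\<in>F. \<forall>b\<in>F. a = b)}"

definition anc :: "'a hedg \<Rightarrow> 'a \<Rightarrow> 'a set" where
  "anc G v = {u. (u, v) \<in> (dedges G)\<^sup>*}"

definition desc :: "'a hedg \<Rightarrow> 'a \<Rightarrow> 'a set" where
  "desc G v = {w. (v, w) \<in> (dedges G)\<^sup>*}"

definition sc :: "'a hedg \<Rightarrow> 'a \<Rightarrow> 'a set" where
  "sc G v = anc G v \<inter> desc G v"

definition anc_set :: "'a hedg \<Rightarrow> 'a set \<Rightarrow> 'a set" where
  "anc_set G Z = (\<Union>z\<in>Z. anc G z)"

text \<open>Nodes of the augmented graph: \<open>Inl v\<close> for \<open>v \<in> V\<close>, \<open>Inr F\<close> for the new node \<open>e_F\<close>.\<close>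
definition aug :: "'a hedg \<Rightarrow> ('a + 'a set) hedg" where
  "aug G = (let N = Inl ` nodes G \<union> Inr ` maxhedges G in
     HEDG N
       ((\<lambda>(v, w). (Inl v, Inl w)) ` dedges G
          \<union> {(Inr F, Inl v) | F v. F \<in> maxhedges G \<and> v \<in> F})
       (singleton_complex N))"

definition acy :: "'a hedg \<Rightarrow> 'a hedg" where
  "acy G = HEDG (nodes G)
     {(v, w). v \<notin> sc G w \<and> (\<exists>w'\<in>sc G w. (v, w') \<in> dedges G)}
     {F'. \<exists>F\<in>hedges G. F' \<subseteq> (\<Union>v\<in>F. sc G v)}"

definition acag :: "'a hedg \<Rightarrow> ('a + 'a set) hedg" where
  "acag G = HEDG (nodes (acy (aug G))) (dedges (acy (aug G)))
                 (singleton_complex (nodes (acy (aug G))))"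

text \<open>Kinds of edges between consecutive path nodes \<open>v_i\<close> and \<open>v_{i+1}\<close>:
  \<open>Fwd\<close>: \<open>v_i \<rightarrow> v_{i+1}\<close>, \<open>Bwd\<close>: \<open>v_i \<leftarrow> v_{i+1}\<close>, \<open>Bi\<close>: \<open>v_i \<leftrightarrow> v_{i+1}\<close>.\<close>
datatype ekind = Fwd | Bwd | Bi

definition edge_ok :: "'a hedg \<Rightarrow> 'a \<Rightarrow> ekind \<Rightarrow> 'a \<Rightarrow> bool" where
  "edge_ok G v k w = (case k of
      Fwd \<Rightarrow> (v, w) \<in> dedges G
    | Bwd \<Rightarrow> (w, v) \<in> dedges G
    | Bi \<Rightarrow> v \<noteq> w \<and> {v, w} \<in> hedges G)"

text \<open>A path: node list \<open>vs\<close> (at least one node, repetitions allowed) together with the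
  edges \<open>es\<close> used between consecutive nodes.\<close>
definition is_path :: "'a hedg \<Rightarrow> 'a list \<Rightarrow> ekind list \<Rightarrow> bool" where
  "is_path G vs es \<longleftrightarrow> vs \<noteq> [] \<and> length vs = Suc (length es) \<and> set vs \<subseteq> nodes G
     \<and> (\<forall>i < length es. edge_ok G (vs ! i) (es ! i) (vs ! Suc i))"

definition head_at_end :: "ekind \<Rightarrow> bool" where
  "head_at_end k \<longleftrightarrow> k = Fwd \<or> k = Bi"

definition head_at_start :: "ekind \<Rightarrow> bool" where
  "head_at_start k \<longleftrightarrow> k = Bwd \<or> k = Bi"

text \<open>Intermediate node \<open>vs!i\<close> (\<open>0 < i < length es\<close>) is a collider.\<close>
definition collider :: "ekind list \<Rightarrow> nat \<Rightarrow> bool" where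
  "collider es i \<longleftrightarrow> head_at_end (es ! (i - 1)) \<and> head_at_start (es ! i)"

definition d_blocked :: "'a hedg \<Rightarrow> 'a set \<Rightarrow> 'a list \<Rightarrow> ekind list \<Rightarrow> bool" where
  "d_blocked G Z vs es \<longleftrightarrow> hd vs \<in> Z \<or> last vs \<in> Z \<or>
     (\<exists>i. 0 < i \<and> i < length es \<and>
        ((collider es i \<and> vs ! i \<notin> anc_set G Z) \<or>
         (\<not> collider es i \<and> vs ! i \<in> Z)))"

definition sigma_blocked :: "'a hedg \<Rightarrow> 'a set \<Rightarrow> 'a list \<Rightarrow> ekind list \<Rightarrow> bool" where
  "sigma_blocked G Z vs es \<longleftrightarrow> hd vs \<in> Z \<or> last vs \<in> Z \<or>
     (\<exists>i. 0 < i \<and> i < length es \<and>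
        ((collider es i \<and> vs ! i \<notin> anc_set G Z) \<or>
         (\<not> collider es i \<and> vs ! i \<in> Z \<and>
            ((es ! (i - 1) = Bwd \<and> vs ! (i - 1) \<notin> sc G (vs ! i)) \<or>
             (es ! i = Fwd \<and> vs ! Suc i \<notin> sc G (vs ! i))))))"

definition d_sep :: "'a hedg \<Rightarrow> 'a set \<Rightarrow> 'a set \<Rightarrow> 'a set \<Rightarrow> bool" where
  "d_sep G X Y Z \<longleftrightarrow> (\<forall>vs es. is_path G vs es \<and> hd vs \<in> X \<and> last vs \<in> Y
      \<longrightarrow> d_blocked G Z vs es)"

definition sigma_sep :: "'a hedg \<Rightarrow> 'a set \<Rightarrow> 'a set \<Rightarrow> 'a set \<Rightarrow> bool" where
  "sigma_sep G X Y Z \<longleftrightarrow> (\<forall>vs es. is_path G vs es \<and> hd vs \<in> X \<and> last vs \<in> Y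
      \<longrightarrow> sigma_blocked G Z vs es)"

end

theory Submission
  imports Defs
begin


definition jok :: "'a hedg \<Rightarrow> bool \<Rightarrow> 'a set \<Rightarrow> 'a \<Rightarrow> bool \<times> bool \<Rightarrow> ekind \<Rightarrow> 'a \<Rightarrow> bool" where
  "jok G sig Z v p k w = (if fst p \<and> head_at_start k then v \<in> anc_set G Z
      else v \<notin> Z \<or> (sig \<and> \<not> snd p \<and> \<not> (k = Fwd \<and> w \<notin> sc G v)))"

definition jo :: "'a hedg \<Rightarrow> bool \<Rightarrow> 'a set \<Rightarrow> 'a \<Rightarrow> (bool \<times> bool) option \<Rightarrow> ekind \<Rightarrow> 'a \<Rightarrow> bool" where
  "jo G sig Z v s k w = (case s of None \<Rightarrow> True | Some p \<Rightarrow> jok G sig Z v p k w)"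

inductive ow :: "'a hedg \<Rightarrow> bool \<Rightarrow> 'a set \<Rightarrow> 'a \<Rightarrow> 'a \<Rightarrow> (bool \<times> bool) option \<Rightarrow> bool"
  for G sig Z where
  owb: "x \<in> nodes G \<Longrightarrow> ow G sig Z x x None"
| ows: "ow G sig Z x y s \<Longrightarrow> edge_ok G y k w \<Longrightarrow> w \<in> nodes G \<Longrightarrow> jo G sig Z y s k w
     \<Longrightarrow> ow G sig Z x w (Some (head_at_end k, k = Bwd \<and> y \<notin> sc G w))"

definition gblocked :: "'a hedg \<Rightarrow> bool \<Rightarrow> 'a set \<Rightarrow> 'a list \<Rightarrow> ekind list \<Rightarrow> bool" where
  "gblocked G sig Z vs es \<longleftrightarrow> hd vs \<in> Z \<or> last vs \<in> Z \<or>
     (\<exists>i. 0 < i \<and> i < length es \<and> \<not> jok G sig Z (vs ! i)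
        (head_at_end (es ! (i - 1)), es ! (i - 1) = Bwd \<and> vs ! (i - 1) \<notin> sc G (vs ! i)) (es ! i) (vs ! Suc i))"

lemma sigma_blocked_g: "sigma_blocked G Z vs es = gblocked G True Z vs es"
  unfolding sigma_blocked_def gblocked_def jok_def collider_def by auto

lemma d_blocked_g: "d_blocked G Z vs es = gblocked G False Z vs es"
  unfolding d_blocked_def gblocked_def jok_def collider_def by auto

definition osep :: "'a hedg \<Rightarrow> bool \<Rightarrow> 'a set \<Rightarrow> 'a set \<Rightarrow> 'a set \<Rightarrow> bool" where
  "osep G sig X Y Z \<longleftrightarrow> (\<forall>x y s. x \<in> X \<longrightarrow> y \<in> Y \<longrightarrow> x \<notin> Z \<longrightarrow> y \<notin> Z \<longrightarrow> \<not> ow G sig Z x y s)"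

lemma list_to_ow:
  assumes p: "is_path G vs es"
    and m: "\<forall>i. 0 < i \<and> i < length es \<longrightarrow> jok G sig Z (vs ! i)
        (head_at_end (es ! (i - 1)), es ! (i - 1) = Bwd \<and> vs ! (i - 1) \<notin> sc G (vs ! i)) (es ! i) (vs ! Suc i)"
  shows "n \<le> length es \<Longrightarrow> ow G sig Z (hd vs) (vs ! n)
     (if n = 0 then None else Some (head_at_end (es ! (n - 1)), es ! (n - 1) = Bwd \<and> vs ! (n - 1) \<notin> sc G (vs ! n)))"
proof (induction n)
  case 0
  from p have "vs \<noteq> []" "set vs \<subseteq> nodes G" unfolding is_path_def by auto
  then have "vs ! 0 \<in> nodes G" by (auto intro: nth_mem)
  then show ?case using \<open>vs \<noteq> []\<close> by (simp add: hd_conv_nth owb)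
next
  case (Suc n)
  from p Suc.prems have e: "edge_ok G (vs ! n) (es ! n) (vs ! Suc n)" and l: "length vs = Suc (length es)"
    and sv: "set vs \<subseteq> nodes G" unfolding is_path_def by auto
  have w: "vs ! Suc n \<in> nodes G" using sv l Suc.prems by auto
  have j: "jo G sig Z (vs ! n) (if n = 0 then None else Some (head_at_end (es ! (n - 1)), es ! (n - 1) = Bwd \<and> vs ! (n - 1) \<notin> sc G (vs ! n))) (es ! n) (vs ! Suc n)"
  proof (cases n)
    case (Suc n')
    then show ?thesis using m[rule_format, of "Suc n'"] Suc.prems by (simp add: jo_def)
  qed (simp add: jo_def)
  show ?case using ows[OF Suc.IH[OF Suc_leD[OF Suc.prems]] e w j] by simp
qed

lemma ow_to_list:
  "ow G sig Z x y s \<Longrightarrow> \<exists>vs es. is_path G vs es \<and> hd vs = x \<and> last vs = y \<and>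
    (\<forall>i. 0 < i \<and> i < length es \<longrightarrow> jok G sig Z (vs ! i)
        (head_at_end (es ! (i - 1)), es ! (i - 1) = Bwd \<and> vs ! (i - 1) \<notin> sc G (vs ! i)) (es ! i) (vs ! Suc i))
    \<and> (s = None \<longrightarrow> es = [])
    \<and> (\<forall>p. s = Some p \<longrightarrow> es \<noteq> [] \<and> p = (head_at_end (last es), last es = Bwd \<and> vs ! (length es - 1) \<notin> sc G y))"
proof (induction rule: ow.induct)
  case (owb x)
  show ?case by (rule exI[of _ "[x]"], rule exI[of _ "[]"]) (simp add: is_path_def owb)
next
  case (ows x y s k w)
  then obtain vs es where p: "is_path G vs es" and h: "hd vs = x" and la: "last vs = y"
    and m: "\<forall>i. 0 < i \<and> i < length es \<longrightarrow> jok G sig Z (vs ! i)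
        (head_at_end (es ! (i - 1)), es ! (i - 1) = Bwd \<and> vs ! (i - 1) \<notin> sc G (vs ! i)) (es ! i) (vs ! Suc i)"
    and sn: "s = None \<longrightarrow> es = []"
    and ss: "\<forall>p. s = Some p \<longrightarrow> es \<noteq> [] \<and> p = (head_at_end (last es), last es = Bwd \<and> vs ! (length es - 1) \<notin> sc G y)"
    by blast
  from p have ne: "vs \<noteq> []" and l: "length vs = Suc (length es)" and sv: "set vs \<subseteq> nodes G"
    and eo: "\<forall>i < length es. edge_ok G (vs ! i) (es ! i) (vs ! Suc i)" unfolding is_path_def by auto
  have lastn: "vs ! length es = y" using la ne l by (simp add: last_conv_nth)
  define vs' where "vs' = vs @ [w]"
  define es' where "es' = es @ [k]"
  have p': "is_path G vs' es'"
    unfolding is_path_def vs'_def es'_def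
  proof (intro conjI allI impI)
    fix i assume "i < length (es @ [k])"
    then consider "i < length es" | "i = length es" by fastforce
    then show "edge_ok G ((vs @ [w]) ! i) ((es @ [k]) ! i) ((vs @ [w]) ! Suc i)"
    proof cases
      case 1 then show ?thesis using eo l by (simp add: nth_append)
    next
      case 2 then show ?thesis using ows.hyps(2) l lastn by (simp add: nth_append)
    qed
  qed (use l sv ows.hyps(3) in auto)
  have m': "\<forall>i. 0 < i \<and> i < length es' \<longrightarrow> jok G sig Z (vs' ! i)
        (head_at_end (es' ! (i - 1)), es' ! (i - 1) = Bwd \<and> vs' ! (i - 1) \<notin> sc G (vs' ! i)) (es' ! i) (vs' ! Suc i)"
  proof (intro allI impI)
    fix i assume i: "0 < i \<and> i < length es'"
    then consider "i < length es" | "i = length es" by (fastforce simp: es'_def)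
    then show "jok G sig Z (vs' ! i)
        (head_at_end (es' ! (i - 1)), es' ! (i - 1) = Bwd \<and> vs' ! (i - 1) \<notin> sc G (vs' ! i)) (es' ! i) (vs' ! Suc i)"
    proof cases
      case 1
      then have "i - 1 < length es" "Suc i < length vs" "i < length vs" "i - 1 < length vs" using l by auto
      then show ?thesis using m i 1 by (simp add: vs'_def es'_def nth_append)
    next
      case 2
      then have "es \<noteq> []" using i by auto
      then obtain p where sp: "s = Some p" using sn by (cases s) auto
      with ss have pe: "p = (head_at_end (last es), last es = Bwd \<and> vs ! (length es - 1) \<notin> sc G y)" by auto
      have "last es = es ! (length es - 1)" using \<open>es \<noteq> []\<close> by (simp add: last_conv_nth)
      moreover have "length es - 1 < length vs" "length es - 1 < length es" using l \<open>es \<noteq> []\<close> by auto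
      ultimately show ?thesis using ows.hyps(4) sp pe 2 i l lastn \<open>es \<noteq> []\<close>
        by (simp add: vs'_def es'_def nth_append jo_def)
    qed
  qed
  show ?case
    apply (rule exI[of _ vs'], rule exI[of _ es'])
    using p' m' h ne l lastn by (simp add: vs'_def es'_def nth_append)
qed

lemma sep_osep:
  "(\<forall>vs es. is_path G vs es \<and> hd vs \<in> X \<and> last vs \<in> Y \<longrightarrow> gblocked G sig Z vs es) \<longleftrightarrow> osep G sig X Y Z"
proof
  assume A: "\<forall>vs es. is_path G vs es \<and> hd vs \<in> X \<and> last vs \<in> Y \<longrightarrow> gblocked G sig Z vs es"
  show "osep G sig X Y Z" unfolding osep_def
  proof (intro allI impI notI)
    fix x y s assume "x \<in> X" "y \<in> Y" "x \<notin> Z" "y \<notin> Z" "ow G sig Z x y s"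
    then show False using ow_to_list[OF \<open>ow G sig Z x y s\<close>] A unfolding gblocked_def by metis
  qed
next
  assume B: "osep G sig X Y Z"
  show "\<forall>vs es. is_path G vs es \<and> hd vs \<in> X \<and> last vs \<in> Y \<longrightarrow> gblocked G sig Z vs es"
  proof (intro allI impI)
    fix vs es assume a: "is_path G vs es \<and> hd vs \<in> X \<and> last vs \<in> Y"
    show "gblocked G sig Z vs es"
    proof (rule ccontr)
      assume nb: "\<not> gblocked G sig Z vs es"
      then have m: "\<forall>i. 0 < i \<and> i < length es \<longrightarrow> jok G sig Z (vs ! i)
        (head_at_end (es ! (i - 1)), es ! (i - 1) = Bwd \<and> vs ! (i - 1) \<notin> sc G (vs ! i)) (es ! i) (vs ! Suc i)"
        unfolding gblocked_def by auto
      from a have "vs \<noteq> []" "length vs = Suc (length es)" unfolding is_path_def by auto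
      then have "vs ! length es = last vs" by (simp add: last_conv_nth)
      with list_to_ow[OF conjunct1[OF a] m, of "length es"] obtain s where "ow G sig Z (hd vs) (last vs) s" by auto
      then show False using B a nb unfolding osep_def gblocked_def by auto
    qed
  qed
qed

lemma sigma_sep_osep: "sigma_sep G X Y Z = osep G True X Y Z"
  unfolding sigma_sep_def sigma_blocked_g sep_osep ..

lemma d_sep_osep: "d_sep G X Y Z = osep G False X Y Z"
  unfolding d_sep_def d_blocked_g sep_osep ..



lemma sc_refl: "v \<in> sc G v"
  unfolding sc_def anc_def desc_def by auto

lemma sc_sym: "w \<in> sc G v \<longleftrightarrow> v \<in> sc G w"
  unfolding sc_def anc_def desc_def by auto

lemma sc_trans: "w \<in> sc G v \<Longrightarrow> u \<in> sc G w \<Longrightarrow> u \<in> sc G v"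
  unfolding sc_def anc_def desc_def
  by (metis (no_types, lifting) Int_iff mem_Collect_eq rtrancl_trans)

lemma sc_eq: "w \<in> sc G v \<Longrightarrow> sc G w = sc G v"
proof -
  assume a: "w \<in> sc G v"
  then have b: "v \<in> sc G w" using sc_sym by metis
  show ?thesis
  proof
    show "sc G w \<subseteq> sc G v" using sc_trans[OF a] by blast
    show "sc G v \<subseteq> sc G w" using sc_trans[OF b] by blast
  qed
qed

lemma sc_iff: "w \<in> sc G v \<longleftrightarrow> (v, w) \<in> (dedges G)\<^sup>* \<and> (w, v) \<in> (dedges G)\<^sup>*"
  unfolding sc_def anc_def desc_def by auto

lemma ow_nodes: "ow G sig Z x y s \<Longrightarrow> x \<in> nodes G \<and> y \<in> nodes G"
  by (induction rule: ow.induct) auto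

lemma ow_state: "ow G sig Z x y s \<Longrightarrow> s = Some (a, ob) \<Longrightarrow> ob \<Longrightarrow> \<not> a"
  by (induction rule: ow.induct) (auto simp: head_at_end_def)

lemma ow_start: "ow G sig Z x y None \<Longrightarrow> y = x"
  by (cases rule: ow.cases) auto

definition subj :: "'a hedg \<Rightarrow> bool \<Rightarrow> 'a set \<Rightarrow> 'a \<Rightarrow> (bool \<times> bool) option \<Rightarrow> (bool \<times> bool) option \<Rightarrow> bool" where
  "subj G sig Z y s' s \<longleftrightarrow> (\<forall>k w. jo G sig Z y s k w \<longrightarrow> jo G sig Z y s' k w)"

lemma subj_refl: "subj G sig Z y s s" unfolding subj_def by auto

lemma jo_bi_indep: "jo G sig Z y s Bi w = jo G sig Z y s Bi w'"
  unfolding jo_def jok_def by (cases s) auto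

lemma subj_bi:
  assumes st: "\<forall>a ob. s' = Some (a, ob) \<longrightarrow> ob \<longrightarrow> \<not> a" and j: "jo G sig Z y s' Bi y"
  shows "subj G sig Z y s' (Some (True, False))"
  unfolding subj_def
proof (intro allI impI)
  fix k w assume h: "jo G sig Z y (Some (True, False)) k w"
  show "jo G sig Z y s' k w"
  proof (cases s')
    case (Some p)
    obtain a ob where p: "p = (a, ob)" by fastforce
    have j': "jok G sig Z y (a, ob) Bi y" using j Some p by (simp add: jo_def)
    have h': "jok G sig Z y (True, False) k w" using h by (simp add: jo_def)
    have "ob \<longrightarrow> \<not> a" using st Some p by simp
    then show ?thesis using j' h' Some p
      by (cases k) (simp_all add: jo_def jok_def head_at_start_def split: if_splits)
  qed (simp add: jo_def)
qed

lemma max_hedge_ex: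
  assumes "finite (hedges G)" "S \<in> hedges G"
  shows "\<exists>F\<in>maxhedges G. S \<subseteq> F"
proof -
  obtain m where m: "m \<in> hedges G" "S \<subseteq> m" "\<forall>b\<in>hedges G. m \<subseteq> b \<longrightarrow> m = b"
    using finite_has_maximal2[OF assms] by blast
  then have "m \<in> maxhedges G" unfolding maxhedges_def by auto
  then show ?thesis using m by auto
qed

section \<open>Augmentation\<close>

lemma Inl_img[simp]: "Inl y \<in> Inl ` A \<longleftrightarrow> y \<in> A" by auto
lemma Inr_Inl_img[simp]: "Inr y \<notin> Inl ` A" by auto

lemma aug_nodes: "nodes (aug G) = Inl ` nodes G \<union> Inr ` maxhedges G"
  unfolding aug_def Let_def by simp

lemma aug_edges: "dedges (aug G) = (\<lambda>(v, w). (Inl v, Inl w)) ` dedges G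
          \<union> {(Inr F, Inl v) | F v. F \<in> maxhedges G \<and> v \<in> F}"
  unfolding aug_def Let_def by simp

lemma aug_hedges: "hedges (aug G) = singleton_complex (nodes (aug G))"
  unfolding aug_def Let_def by simp

lemma aug_edge_Inl[simp]: "(Inl v, Inl w) \<in> dedges (aug G) \<longleftrightarrow> (v, w) \<in> dedges G"
  unfolding aug_edges by auto

lemma aug_edge_Inr[simp]: "(Inr F, Inl w) \<in> dedges (aug G) \<longleftrightarrow> F \<in> maxhedges G \<and> w \<in> F"
  unfolding aug_edges by auto

lemma aug_edge_to_Inr[simp]: "(a, Inr F) \<notin> dedges (aug G)"
  unfolding aug_edges by auto

lemma aug_rt_from_Inl: "(a, b) \<in> (dedges (aug G))\<^sup>* \<Longrightarrow> a = Inl v \<Longrightarrow> \<exists>w. b = Inl w \<and> (v, w) \<in> (dedges G)\<^sup>*"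
proof (induction rule: rtrancl_induct)
  case (step y z)
  then obtain w where "y = Inl w" "(v, w) \<in> (dedges G)\<^sup>*" by auto
  moreover obtain u where "z = Inl u" using step.hyps(2) by (cases z) auto
  ultimately show ?case using step.hyps(2) by auto
qed auto

lemma aug_rt_to_Inr: "(a, b) \<in> (dedges (aug G))\<^sup>* \<Longrightarrow> b = Inr F \<Longrightarrow> a = Inr F"
  by (induction rule: rtrancl_induct) auto

lemma aug_rt_Inl: "(Inl v, Inl w) \<in> (dedges (aug G))\<^sup>* \<longleftrightarrow> (v, w) \<in> (dedges G)\<^sup>*"
proof
  assume "(v, w) \<in> (dedges G)\<^sup>*"
  then show "(Inl v, Inl w) \<in> (dedges (aug G))\<^sup>*"
  proof (induction rule: rtrancl_induct)
    case (step y z)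
    then have "(Inl y, Inl z) \<in> dedges (aug G)" by simp
    with step.IH show ?case by (rule rtrancl_into_rtrancl)
  qed simp
next
  assume "(Inl v, Inl w) \<in> (dedges (aug G))\<^sup>*"
  from aug_rt_from_Inl[OF this refl] show "(v, w) \<in> (dedges G)\<^sup>*" by simp
qed

lemma sc_aug_Inl: "sc (aug G) (Inl v) = Inl ` sc G v"
proof
  show "sc (aug G) (Inl v) \<subseteq> Inl ` sc G v"
  proof
    fix b :: "'a + 'a set" assume b: "b \<in> sc (aug G) (Inl v)"
    then have r1: "(Inl v, b) \<in> (dedges (aug G))\<^sup>*" and r2: "(b, Inl v) \<in> (dedges (aug G))\<^sup>*"
      unfolding sc_iff by auto
    obtain w where w: "b = Inl w" using aug_rt_from_Inl[OF r1 refl] by blast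
    have "(v, w) \<in> (dedges G)\<^sup>*" "(w, v) \<in> (dedges G)\<^sup>*"
      using r1 r2 unfolding w aug_rt_Inl by auto
    then have "w \<in> sc G v" unfolding sc_iff by simp
    then show "b \<in> Inl ` sc G v" using w by simp
  qed
next
  show "Inl ` sc G v \<subseteq> sc (aug G) (Inl v)"
  proof
    fix b :: "'a + 'a set" assume "b \<in> Inl ` sc G v"
    then obtain w where w: "b = Inl w" "w \<in> sc G v" by blast
    then show "b \<in> sc (aug G) (Inl v)" unfolding sc_iff by (simp add: aug_rt_Inl)
  qed
qed

lemma sc_aug_Inr: "sc (aug G) (Inr F) = {Inr F}"
proof -
  have "b = Inr F" if "b \<in> sc (aug G) (Inr F)" for b
  proof -
    from that have "(b, Inr F) \<in> (dedges (aug G))\<^sup>*" unfolding sc_iff by simp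
    from aug_rt_to_Inr[OF this refl] show ?thesis .
  qed
  then show ?thesis using sc_refl[of "Inr F" "aug G"] by blast
qed

lemma anc_set_aug: "Inl u \<in> anc_set (aug G) (Inl ` Z) \<longleftrightarrow> u \<in> anc_set G Z"
proof -
  have "Inl u \<in> anc_set (aug G) (Inl ` Z) \<longleftrightarrow> (\<exists>z\<in>Z. (Inl u, Inl z) \<in> (dedges (aug G))\<^sup>*)"
    unfolding anc_set_def anc_def by blast
  also have "\<dots> \<longleftrightarrow> (\<exists>z\<in>Z. (u, z) \<in> (dedges G)\<^sup>*)" by (simp add: aug_rt_Inl)
  also have "\<dots> \<longleftrightarrow> u \<in> anc_set G Z" unfolding anc_set_def anc_def by blast
  finally show ?thesis .
qed

lemma jok_aug: "jok (aug G) sig (Inl ` Z) (Inl y) p k (Inl w) = jok G sig Z y p k w"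
  unfolding jok_def by (auto simp: anc_set_aug sc_aug_Inl)

lemma jo_aug: "jo (aug G) sig (Inl ` Z) (Inl y) s k (Inl w) = jo G sig Z y s k w"
  unfolding jo_def by (cases s) (auto simp: jok_aug)

lemma jo_aug_bwd: "jo (aug G) sig (Inl ` Z) (Inl y) s Bwd (Inr F) = jo G sig Z y s Bi w"
  unfolding jo_def jok_def head_at_start_def by (cases s) (auto simp: anc_set_aug)

lemma aug_not_bi: "\<not> edge_ok (aug G) a Bi b"
  unfolding edge_ok_def aug_hedges singleton_complex_def by auto

lemma G_to_aug:
  assumes fin: "finite (hedges G)"
  shows "ow G sig Z x y s \<Longrightarrow> ow (aug G) sig (Inl ` Z) (Inl x) (Inl y) s"
proof (induction rule: ow.induct)
  case (owb x)
  then show ?case by (auto intro!: ow.owb simp: aug_nodes)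
next
  case (ows x y s k w)
  have wn: "Inl w \<in> nodes (aug G)" using ows.hyps(3) by (simp add: aug_nodes)
  have jA: "jo (aug G) sig (Inl ` Z) (Inl y) s k (Inl w)" using ows.hyps(4) by (simp add: jo_aug)
  have scA: "(Inl y \<notin> sc (aug G) (Inl w)) = (y \<notin> sc G w)" by (auto simp: sc_aug_Inl)
  show ?case
  proof (cases k)
    case Fwd
    then show ?thesis using ows.prems ows.hyps ows.IH wn jA
      using ow.ows[OF ows.IH, of k "Inl w"] by (simp add: edge_ok_def scA)
  next
    case Bwd
    then show ?thesis using ow.ows[OF ows.IH, of k "Inl w"] ows.hyps wn jA by (simp add: edge_ok_def scA)
  next
    case Bi
    then have "y \<noteq> w" "{y, w} \<in> hedges G" using ows.hyps(2) by (auto simp: edge_ok_def)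
    then obtain F where F: "F \<in> maxhedges G" "{y, w} \<subseteq> F" using max_hedge_ex[OF fin] by blast
    have e1: "edge_ok (aug G) (Inl y) Bwd (Inr F)" using F by (simp add: edge_ok_def)
    have n1: "Inr F \<in> nodes (aug G)" using F by (simp add: aug_nodes)
    have j1: "jo (aug G) sig (Inl ` Z) (Inl y) s Bwd (Inr F)" using ows.hyps(4) Bi jo_aug_bwd by metis
    have s1: "ow (aug G) sig (Inl ` Z) (Inl x) (Inr F) (Some (False, True))"
      using ow.ows[OF ows.IH e1 n1 j1] by (simp add: head_at_end_def sc_aug_Inr)
    have e2: "edge_ok (aug G) (Inr F) Fwd (Inl w)" using F by (simp add: edge_ok_def)
    have j2: "jo (aug G) sig (Inl ` Z) (Inr F) (Some (False, True)) Fwd (Inl w)"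
      by (auto simp: jo_def jok_def)
    show ?thesis using ow.ows[OF s1 e2 wn j2] Bi by (simp add: head_at_end_def)
  qed
qed

lemma aug_to_G:
  assumes sub: "\<forall>F\<in>hedges G. \<forall>F'. F' \<subseteq> F \<longrightarrow> F' \<in> hedges G"
  shows "ow (aug G) sig (Inl ` Z) a b s \<Longrightarrow> a = Inl x \<Longrightarrow>
    (case b of Inl y \<Rightarrow> \<exists>s'. ow G sig Z x y s' \<and> subj G sig Z y s' s
      | Inr F \<Rightarrow> F \<in> maxhedges G \<and> (\<exists>y s'. y \<in> F \<and> ow G sig Z x y s' \<and> jo G sig Z y s' Bi y))"
proof (induction rule: ow.induct)
  case (owb a)
  then show ?case by (auto simp: aug_nodes intro!: ow.owb subj_refl)
next
  case (ows a b s k c)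
  note IH = ows.IH[OF ows.prems]
  show ?case
  proof (cases b)
    case (Inl y)
    then obtain s' where o': "ow G sig Z x y s'" and su: "subj G sig Z y s' s" using IH by auto
    show ?thesis
    proof (cases c)
      case (Inl w)
      have "k \<noteq> Bi" using ows.hyps(2) aug_not_bi by metis
      then have e: "edge_ok G y k w" using ows.hyps(2) \<open>b = Inl y\<close> Inl
        by (cases k) (auto simp: edge_ok_def)
      have wn: "w \<in> nodes G" using ows.hyps(3) Inl by (auto simp: aug_nodes)
      have j: "jo G sig Z y s' k w" using ows.hyps(4) su \<open>b = Inl y\<close> Inl
        by (auto simp: subj_def jo_aug)
      show ?thesis using ow.ows[OF o' e wn j] Inl \<open>b = Inl y\<close> subj_refl by (fastforce simp add: sc_aug_Inl)
    next
      case (Inr F)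
      have k: "k = Bwd" "F \<in> maxhedges G" "y \<in> F" using ows.hyps(2) \<open>b = Inl y\<close> Inr aug_not_bi[of G]
        by (cases k; auto simp: edge_ok_def)+
      have "jo G sig Z y s Bi y" using ows.hyps(4) \<open>b = Inl y\<close> Inr k jo_aug_bwd by metis
      then have "jo G sig Z y s' Bi y" using su by (auto simp: subj_def)
      then show ?thesis using Inr k o' by auto
    qed
  next
    case (Inr F)
    then obtain y s' where y: "F \<in> maxhedges G" "y \<in> F" "ow G sig Z x y s'" "jo G sig Z y s' Bi y" using IH by auto
    have "k \<noteq> Bi" using ows.hyps(2) aug_not_bi by metis
    then obtain w where c: "c = Inl w" "k = Fwd" "w \<in> F"
      using ows.hyps(2) Inr by (cases c; cases k) (auto simp: edge_ok_def)
    show ?thesis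
    proof (cases "w = y")
      case True
      have "subj G sig Z y s' (Some (True, False))"
        by (rule subj_bi) (use ow_state[OF y(3)] y(4) in auto)
      then show ?thesis using c True y by (auto simp: head_at_end_def)
    next
      case False
      have Fh: "F \<in> hedges G" using y(1) by (simp add: maxhedges_def)
      have e: "edge_ok G y Bi w" using False sub Fh y(2) c(3) by (auto simp: edge_ok_def)
      have wn: "w \<in> nodes G" using ows.hyps(3) c by (auto simp: aug_nodes)
      have j: "jo G sig Z y s' Bi w" using y(4) jo_bi_indep by metis
      show ?thesis using ow.ows[OF y(3) e wn j] c subj_refl by (fastforce simp add: head_at_end_def)
    qed
  qed
qed

lemma osep_aug:
  assumes "finite (hedges G)" "\<forall>F\<in>hedges G. \<forall>F'. F' \<subseteq> F \<longrightarrow> F' \<in> hedges G"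
  shows "osep (aug G) sig (Inl ` X) (Inl ` Y) (Inl ` Z) \<longleftrightarrow> osep G sig X Y Z"
proof
  assume A: "osep (aug G) sig (Inl ` X) (Inl ` Y) (Inl ` Z)"
  show "osep G sig X Y Z" unfolding osep_def
  proof (intro allI impI notI)
    fix x y s assume "x \<in> X" "y \<in> Y" "x \<notin> Z" "y \<notin> Z" "ow G sig Z x y s"
    then show False using A G_to_aug[OF assms(1)] unfolding osep_def by blast
  qed
next
  assume B: "osep G sig X Y Z"
  show "osep (aug G) sig (Inl ` X) (Inl ` Y) (Inl ` Z)" unfolding osep_def
  proof (intro allI impI notI)
    fix a b s assume "a \<in> Inl ` X" "b \<in> Inl ` Y" "a \<notin> Inl ` Z" "b \<notin> Inl ` Z" "ow (aug G) sig (Inl ` Z) a b s"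
    then obtain x y where "a = Inl x" "b = Inl y" "x \<in> X" "y \<in> Y" "x \<notin> Z" "y \<notin> Z" by auto
    with aug_to_G[OF assms(2) \<open>ow (aug G) sig (Inl ` Z) a b s\<close>] B show False
      unfolding osep_def by auto
  qed
qed



section \<open>Acyclification basics\<close>

lemma anc_set_iff: "r \<in> anc_set G Z \<longleftrightarrow> (\<exists>z\<in>Z. (r, z) \<in> (dedges G)\<^sup>*)"
  by (simp add: anc_set_def anc_def)

lemma acy_nodes[simp]: "nodes (acy G) = nodes G"
  unfolding acy_def by simp

lemma acy_edge: "(v, w) \<in> dedges (acy G) \<longleftrightarrow> v \<notin> sc G w \<and> (\<exists>w'\<in>sc G w. (v, w') \<in> dedges G)"
  unfolding acy_def by simp

lemma acy_hedge: "F' \<in> hedges (acy G) \<longleftrightarrow> (\<exists>F\<in>hedges G. F' \<subseteq> (\<Union>v\<in>F. sc G v))"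
  unfolding acy_def by simp

lemma rt_nodes: "(v, w) \<in> (dedges G)\<^sup>* \<Longrightarrow> dedges G \<subseteq> nodes G \<times> nodes G \<Longrightarrow> v \<in> nodes G \<Longrightarrow> w \<in> nodes G"
  by (induction rule: rtrancl_induct) auto

lemma sc_nodes: "wf_hedg G \<Longrightarrow> v \<in> nodes G \<Longrightarrow> w \<in> sc G v \<Longrightarrow> w \<in> nodes G"
  unfolding wf_hedg_def sc_iff using rt_nodes by metis

lemma acy_rt_G: "(u, z) \<in> (dedges (acy G))\<^sup>* \<Longrightarrow> (u, z) \<in> (dedges G)\<^sup>*"
proof (induction rule: rtrancl_induct)
  case (step y z)
  then obtain w' where "w' \<in> sc G z" "(y, w') \<in> dedges G" unfolding acy_edge by blast
  then have "(w', z) \<in> (dedges G)\<^sup>*" unfolding sc_iff by blast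
  then have "(y, z) \<in> (dedges G)\<^sup>*" using \<open>(y, w') \<in> dedges G\<close> by (rule converse_rtrancl_into_rtrancl[rotated])
  with step.IH show ?case by (rule rtrancl_trans)
qed simp

lemma anc_set_acy_G: "r \<in> anc_set (acy G) Z \<Longrightarrow> r \<in> anc_set G Z"
proof -
  assume "r \<in> anc_set (acy G) Z"
  then obtain z where "z \<in> Z" "(r, z) \<in> (dedges (acy G))\<^sup>*" unfolding anc_set_iff by blast
  then have "(r, z) \<in> (dedges G)\<^sup>*" using acy_rt_G by metis
  then show ?thesis using \<open>z \<in> Z\<close> unfolding anc_set_iff by blast
qed

lemma rep_lemma: "(u, z) \<in> (dedges G)\<^sup>* \<Longrightarrow> \<exists>r\<in>sc G u. (r, z) \<in> (dedges (acy G))\<^sup>*"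
proof (induction rule: converse_rtrancl_induct)
  case base
  have "z \<in> sc G z" by (rule sc_refl)
  then show ?case by blast
next
  case (step u u')
  then obtain r' where r': "r' \<in> sc G u'" "(r', z) \<in> (dedges (acy G))\<^sup>*" by blast
  show ?case
  proof (cases "u \<in> sc G u'")
    case True
    then have "u' \<in> sc G u" using sc_sym by metis
    then have "r' \<in> sc G u" using r'(1) by (rule sc_trans)
    then show ?thesis using r'(2) by blast
  next
    case False
    have e: "sc G r' = sc G u'" using r'(1) by (rule sc_eq)
    have "u' \<in> sc G r'" using r'(1) sc_sym by metis
    moreover have "u \<notin> sc G r'" using False e by simp
    ultimately have "(u, r') \<in> dedges (acy G)" unfolding acy_edge using step.hyps(1) by blast
    then have "(u, z) \<in> (dedges (acy G))\<^sup>*" using r'(2) by (rule converse_rtrancl_into_rtrancl)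
    moreover have "u \<in> sc G u" by (rule sc_refl)
    ultimately show ?thesis by blast
  qed
qed

lemma rep_anc: "y \<in> anc_set G Z \<Longrightarrow> \<exists>r\<in>sc G y. r \<in> anc_set (acy G) Z"
proof -
  assume "y \<in> anc_set G Z"
  then obtain z where "z \<in> Z" "(y, z) \<in> (dedges G)\<^sup>*" unfolding anc_set_iff by blast
  then obtain r where "r \<in> sc G y" "(r, z) \<in> (dedges (acy G))\<^sup>*" using rep_lemma[of y z G] by blast
  then show ?thesis using \<open>z \<in> Z\<close> unfolding anc_set_iff by blast
qed

lemma wf_acy: assumes "wf_hedg G" shows "wf_hedg (acy G)"
proof -
  have "finite (nodes G)" "dedges G \<subseteq> nodes G \<times> nodes G" "hedges G \<subseteq> Pow (nodes G)"
    "\<forall>v\<in>nodes G. {v} \<in> hedges G" using assms unfolding wf_hedg_def by auto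
  note h = this
  have e: "dedges (acy G) \<subseteq> nodes G \<times> nodes G"
  proof
    fix p assume "p \<in> dedges (acy G)"
    obtain v w where p: "p = (v, w)" by (cases p)
    with \<open>p \<in> dedges (acy G)\<close> have "(v, w) \<in> dedges (acy G)" by simp
    then obtain w' where w'': "w' \<in> sc G w" "(v, w') \<in> dedges G" unfolding acy_edge by blast
    then have "v \<in> nodes G" "w' \<in> nodes G" using h(2) by auto
    moreover have "w \<in> nodes G"
    proof (cases "w' = w")
      case False
      have r: "(w', w) \<in> (dedges G)\<^sup>*" using w''(1) unfolding sc_iff by simp
      obtain u where "(u, w) \<in> dedges G" using r False by (cases rule: rtranclE) auto
      then show ?thesis using h(2) by auto
    qed (use \<open>w' \<in> nodes G\<close> in simp)
    ultimately show "p \<in> nodes G \<times> nodes G" using p by simp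
  qed
  have hp: "hedges (acy G) \<subseteq> Pow (nodes G)"
  proof
    fix F' assume "F' \<in> hedges (acy G)"
    then obtain F where F: "F \<in> hedges G" "F' \<subseteq> (\<Union>v\<in>F. sc G v)" unfolding acy_hedge by blast
    have Fn: "F \<subseteq> nodes G" using F h(3) by auto
    have "(\<Union>v\<in>F. sc G v) \<subseteq> nodes G"
    proof
      fix u assume "u \<in> (\<Union>v\<in>F. sc G v)"
      then obtain v where "v \<in> F" "u \<in> sc G v" by blast
      then show "u \<in> nodes G" using sc_nodes[OF assms, of v u] Fn by blast
    qed
    then show "F' \<in> Pow (nodes G)" using F(2) by blast
  qed
  have "finite (Pow (nodes G))" using h(1) by simp
  show ?thesis unfolding wf_hedg_def
  proof (intro conjI ballI allI impI)
    show "finite (nodes (acy G))" using h(1) by simp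
    show "dedges (acy G) \<subseteq> nodes (acy G) \<times> nodes (acy G)" using e by simp
    show "hedges (acy G) \<subseteq> Pow (nodes (acy G))" using hp by simp
  next
    fix v assume "v \<in> nodes (acy G)"
    then have "{v} \<in> hedges G" using h(4) by simp
    moreover have "{v} \<subseteq> (\<Union>u\<in>{v}. sc G u)" using sc_refl[of v G] by simp
    ultimately show "{v} \<in> hedges (acy G)" unfolding acy_hedge by blast
  next
    fix F F' assume a: "F \<in> hedges (acy G)" "F' \<subseteq> F"
    then obtain F0 where "F0 \<in> hedges G" "F \<subseteq> (\<Union>u\<in>F0. sc G u)" unfolding acy_hedge by blast
    then have "F' \<subseteq> (\<Union>u\<in>F0. sc G u)" using a(2) by (rule_tac subset_trans) auto
    then show "F' \<in> hedges (acy G)" unfolding acy_hedge using \<open>F0 \<in> hedges G\<close> by blast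
  qed
qed

lemma wf_fin_hedges: "wf_hedg G \<Longrightarrow> finite (hedges G)"
  unfolding wf_hedg_def by (meson finite_Pow_iff rev_finite_subset)

lemma wf_subcl: "wf_hedg G \<Longrightarrow> \<forall>F\<in>hedges G. \<forall>F'. F' \<subseteq> F \<longrightarrow> F' \<in> hedges G"
  unfolding wf_hedg_def by blast

lemma wf_aug: assumes "wf_hedg G" shows "wf_hedg (aug G)"
proof -
  have fh: "finite (hedges G)" using wf_fin_hedges[OF assms] .
  have "finite (maxhedges G)" using fh unfolding maxhedges_def by simp
  moreover have "finite (nodes G)" using assms unfolding wf_hedg_def by simp
  ultimately have fn: "finite (nodes (aug G))" unfolding aug_nodes by simp
  have mh: "F \<in> maxhedges G \<Longrightarrow> F \<subseteq> nodes G" for F using assms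
    unfolding maxhedges_def wf_hedg_def by auto
  have "dedges (aug G) \<subseteq> nodes (aug G) \<times> nodes (aug G)"
    using assms mh unfolding aug_edges aug_nodes wf_hedg_def by fastforce
  then show ?thesis using fn unfolding wf_hedg_def aug_hedges singleton_complex_def by (auto; blast)
qed



lemma jA1: "jo H False Z v None k w" by (simp add: jo_def)

lemma jA2: "v \<notin> Z \<Longrightarrow> \<not> head_at_start k \<Longrightarrow> jo H sig Z v (Some (a, ob)) k w"
  by (simp add: jo_def jok_def)

lemma jA3: "v \<notin> Z \<Longrightarrow> jo H sig Z v (Some (False, ob)) k w"
  by (simp add: jo_def jok_def)

lemma jA4: "v \<in> anc_set H Z \<Longrightarrow> head_at_start k \<Longrightarrow> jo H sig Z v (Some (True, ob)) k w"
  by (simp add: jo_def jok_def)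

lemma F1: "jo G True Z y (Some (a, True)) k n \<Longrightarrow> \<not> a \<Longrightarrow> y \<notin> Z"
  by (simp add: jo_def jok_def)

lemma F2: "jo G True Z y sG Fwd n \<Longrightarrow> sG \<noteq> None \<Longrightarrow> n \<notin> sc G y \<Longrightarrow> y \<notin> Z"
  by (cases sG) (auto simp: jo_def jok_def head_at_start_def)

lemma F3: "jo G True Z y (Some (True, ob)) k n \<Longrightarrow> head_at_start k \<Longrightarrow> y \<in> anc_set G Z"
  by (simp add: jo_def jok_def)

lemma not_has_Fwd: "\<not> head_at_start k \<longleftrightarrow> k = Fwd"
  by (cases k) (auto simp: head_at_start_def)

lemma sc_other: "n \<notin> sc G y \<Longrightarrow> u \<in> sc G y \<Longrightarrow> r \<in> sc G n \<Longrightarrow> u \<noteq> r"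
proof
  assume a: "n \<notin> sc G y" "u \<in> sc G y" "r \<in> sc G n" "u = r"
  then have "n \<in> sc G r" using sc_sym by metis
  then have "n \<in> sc G u" using a(4) by simp
  then have "n \<in> sc G y" using a(2) sc_eq by metis
  then show False using a(1) by simp
qed

lemma AE1: "n \<notin> sc G y \<Longrightarrow> (n, y) \<in> dedges G \<Longrightarrow> e \<in> sc G y \<Longrightarrow> (n, e) \<in> dedges (acy G)"
proof -
  assume a: "n \<notin> sc G y" "(n, y) \<in> dedges G" "e \<in> sc G y"
  have "sc G e = sc G y" using a(3) by (rule sc_eq)
  moreover have "y \<in> sc G e" using a(3) sc_sym by metis
  ultimately show ?thesis unfolding acy_edge using a by auto
qed

lemma AE2: "(y, n) \<in> dedges G \<Longrightarrow> n \<notin> sc G y \<Longrightarrow> r \<in> sc G n \<Longrightarrow> (y, r) \<in> dedges (acy G)"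
proof -
  assume a: "(y, n) \<in> dedges G" "n \<notin> sc G y" "r \<in> sc G n"
  have e: "sc G r = sc G n" using a(3) by (rule sc_eq)
  have "n \<in> sc G r" using a(3) sc_sym by metis
  moreover have "y \<notin> sc G n" using a(2) sc_sym by metis
  ultimately show ?thesis unfolding acy_edge using a(1) e by auto
qed

lemma AH1: "F \<in> hedges G \<Longrightarrow> u \<in> F \<Longrightarrow> v \<in> F \<Longrightarrow> e \<in> sc G u \<Longrightarrow> r \<in> sc G v \<Longrightarrow> {e, r} \<in> hedges (acy G)"
proof -
  assume a: "F \<in> hedges G" "u \<in> F" "v \<in> F" "e \<in> sc G u" "r \<in> sc G v"
  have "{e, r} \<subseteq> (\<Union>x\<in>F. sc G x)" using a by blast
  then show ?thesis unfolding acy_hedge using a(1) by blast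
qed

section \<open>Direction: acyclification to G\<close>

definition relB :: "(bool \<times> bool) option \<Rightarrow> (bool \<times> bool) option \<Rightarrow> bool" where
  "relB s' s \<longleftrightarrow> (s = None \<longleftrightarrow> s' = None) \<and>
    (\<forall>a ob a' ob'. s = Some (a, ob) \<longrightarrow> s' = Some (a', ob') \<longrightarrow> (a' \<longrightarrow> a) \<and> (a \<and> \<not> a' \<longrightarrow> \<not> ob'))"

lemma jB:
  assumes r: "relB s' s" and j: "jo (acy G) False Z y s k w"
    and st': "\<forall>a ob. s' = Some (a, ob) \<longrightarrow> ob \<longrightarrow> \<not> a"
    and k1: "k' \<noteq> Fwd \<longrightarrow> k \<noteq> Fwd" and k2: "k' = Fwd \<longrightarrow> (k = Fwd \<or> p \<in> sc G y)"
  shows "jo G True Z y s' k' p"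
proof (cases s)
  case None
  then have "s' = None" using r by (simp add: relB_def)
  then show ?thesis by (simp add: jo_def)
next
  case (Some q)
  obtain a ob where q: "q = (a, ob)" by fastforce
  obtain a' ob' where s': "s' = Some (a', ob')" using r Some q by (cases s') (auto simp: relB_def)
  have ra: "a' \<longrightarrow> a" "a \<and> \<not> a' \<longrightarrow> \<not> ob'" using r Some q s' by (auto simp: relB_def)
  have st: "ob' \<longrightarrow> \<not> a'" using st' s' by simp
  have jj: "jok (acy G) False Z y (a, ob) k w" using j Some q by (simp add: jo_def)
  have anc: "y \<in> anc_set (acy G) Z \<Longrightarrow> y \<in> anc_set G Z" by (rule anc_set_acy_G)
  have jj': "if a \<and> head_at_start k then y \<in> anc_set (acy G) Z else y \<notin> Z"
    using jj unfolding jok_def by (cases "a \<and> head_at_start k") auto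
  have goal: "if a' \<and> head_at_start k' then y \<in> anc_set G Z
      else y \<notin> Z \<or> (\<not> ob' \<and> \<not> (k' = Fwd \<and> p \<notin> sc G y))"
  proof (cases "y \<in> Z")
    case False
    show ?thesis
    proof (cases "a' \<and> head_at_start k'")
      case True
      then have "a" "k' \<noteq> Fwd" using ra(1) not_has_Fwd by auto
      then have "head_at_start k" using k1 not_has_Fwd by metis
      then have "y \<in> anc_set (acy G) Z" using jj' \<open>a\<close> by simp
      then show ?thesis using True anc by simp
    qed (use False in auto)
  next
    case True
    then have ak: "a \<and> head_at_start k" and an: "y \<in> anc_set (acy G) Z" using jj' by (simp_all split: if_splits)
    show ?thesis
    proof (cases "a' \<and> head_at_start k'")
      case True
      then show ?thesis using an anc by simp
    next
      case False
      have "\<not> ob'" using st ra(2) ak by blast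
      moreover have "\<not> (k' = Fwd \<and> p \<notin> sc G y)" using k2 ak not_has_Fwd by blast
      ultimately show ?thesis using False by auto
    qed
  qed
  show ?thesis using goal unfolding s' jo_def jok_def by (cases "a' \<and> head_at_start k'") auto
qed

lemma fwd_chain2:
  assumes wf: "dedges G \<subseteq> nodes G \<times> nodes G" and o: "ow G True Z x m s0"
    and j: "\<forall>p. p \<in> sc G m \<longrightarrow> jo G True Z m s0 Fwd p"
  shows "(m, w) \<in> (dedges G)\<^sup>* \<Longrightarrow> (w, m) \<in> (dedges G)\<^sup>* \<Longrightarrow>
    \<exists>s. ow G True Z x w s \<and> ((w = m \<and> s = s0) \<or> s = Some (True, False))"
proof (induction rule: rtrancl_induct)
  case base
  then show ?case using o by blast
next
  case (step p q)
  have pm: "(p, m) \<in> (dedges G)\<^sup>*" using step.hyps(2) step.prems by (rule converse_rtrancl_into_rtrancl)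
  then obtain s where s: "ow G True Z x p s" "(p = m \<and> s = s0) \<or> s = Some (True, False)"
    using step.IH by blast
  have "(q, p) \<in> (dedges G)\<^sup>*" using step.prems step.hyps(1) by (rule rtrancl_trans)
  moreover have "(p, q) \<in> (dedges G)\<^sup>*" using step.hyps(2) by simp
  ultimately have qp: "q \<in> sc G p" unfolding sc_iff by simp
  have jq: "jo G True Z p s Fwd q"
  proof (cases "p = m \<and> s = s0")
    case True
    then show ?thesis using j qp by simp
  next
    case False
    then have "s = Some (True, False)" using s(2) by blast
    then show ?thesis using qp by (simp add: jo_def jok_def head_at_start_def)
  qed
  have e: "edge_ok G p Fwd q" using step.hyps(2) by (simp add: edge_ok_def)
  have qn: "q \<in> nodes G" using step.hyps(2) wf by auto
  have "ow G True Z x q (Some (True, False))"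
    using ow.ows[OF s(1) e qn jq] by (simp add: head_at_end_def)
  then show ?case by blast
qed

lemma bwd_chain:
  assumes wf: "dedges G \<subseteq> nodes G \<times> nodes G" and o: "ow G True Z x y s0"
    and j: "\<forall>p. jo G True Z y s0 Bwd p"
  shows "(p, y) \<in> (dedges G)\<^sup>* \<Longrightarrow> (y, p) \<in> (dedges G)\<^sup>* \<Longrightarrow>
    \<exists>s. ow G True Z x p s \<and> ((p = y \<and> s = s0) \<or> s = Some (False, False))"
proof (induction rule: converse_rtrancl_induct)
  case base
  then show ?case using o by blast
next
  case (step p p')
  have yp': "(y, p') \<in> (dedges G)\<^sup>*" using step.prems step.hyps(1) by (rule rtrancl_into_rtrancl)
  then obtain s where s: "ow G True Z x p' s" "(p' = y \<and> s = s0) \<or> s = Some (False, False)"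
    using step.IH by blast
  have "(p', p) \<in> (dedges G)\<^sup>*" using step.hyps(2) step.prems by (rule rtrancl_trans)
  moreover have "(p, p') \<in> (dedges G)\<^sup>*" using step.hyps(1) by simp
  ultimately have pp: "p' \<in> sc G p" unfolding sc_iff by simp
  have jq: "jo G True Z p' s Bwd p"
  proof (cases "p' = y \<and> s = s0")
    case True
    then show ?thesis using j by simp
  next
    case False
    then have "s = Some (False, False)" using s(2) by blast
    then show ?thesis by (simp add: jo_def jok_def head_at_start_def)
  qed
  have e: "edge_ok G p' Bwd p" using step.hyps(1) by (simp add: edge_ok_def)
  have qn: "p \<in> nodes G" using step.hyps(1) wf by auto
  have "ow G True Z x p (Some (False, False))"
    using ow.ows[OF s(1) e qn jq] pp by (simp add: head_at_end_def)
  then show ?case by blast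
qed


lemma acy_to_G:
  assumes wf: "wf_hedg G"
  shows "ow (acy G) False Z x y s \<Longrightarrow> \<exists>s'. ow G True Z x y s' \<and> relB s' s"
proof (induction rule: ow.induct)
  case (owb x)
  then have "ow G True Z x x None" by (simp add: ow.owb)
  then show ?case by (auto simp: relB_def)
next
  case (ows x y s k w)
  have E: "dedges G \<subseteq> nodes G \<times> nodes G" using wf unfolding wf_hedg_def by simp
  obtain s' where o': "ow G True Z x y s'" and r: "relB s' s" using ows.IH by blast
  have st': "\<forall>a ob. s' = Some (a, ob) \<longrightarrow> ob \<longrightarrow> \<not> a" using ow_state[OF o'] by blast
  have rT: "relB (Some (True, False)) (Some (head_at_end k, b))" if "k \<noteq> Bwd" for b
    using that by (cases k) (auto simp: relB_def head_at_end_def)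
  show ?case
  proof (cases k)
    case Fwd
    then have "(y, w) \<in> dedges (acy G)" using ows.hyps(2) by (simp add: edge_ok_def)
    then obtain w' where w': "w' \<in> sc G w" "(y, w') \<in> dedges G" unfolding acy_edge by blast
    have j1: "jo G True Z y s' Fwd w'"
      by (rule jB[OF r ows.hyps(4) st']) (use Fwd in auto)
    have e1: "edge_ok G y Fwd w'" using w'(2) by (simp add: edge_ok_def)
    have n1: "w' \<in> nodes G" using w'(2) E by auto
    have o1: "ow G True Z x w' (Some (True, False))"
      using ow.ows[OF o' e1 n1 j1] by (simp add: head_at_end_def)
    have jc: "\<forall>p. p \<in> sc G w' \<longrightarrow> jo G True Z w' (Some (True, False)) Fwd p"
      by (simp add: jo_def jok_def head_at_start_def)
    have "(w', w) \<in> (dedges G)\<^sup>*" "(w, w') \<in> (dedges G)\<^sup>*" using w'(1) unfolding sc_iff by auto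
    then obtain s2 where s2: "ow G True Z x w s2" "s2 = Some (True, False)"
      using fwd_chain2[OF E o1 jc] by blast
    then show ?thesis using rT[of _] Fwd by auto
  next
    case Bwd
    then have "(w, y) \<in> dedges (acy G)" using ows.hyps(2) by (simp add: edge_ok_def)
    then obtain y' where y': "y' \<in> sc G y" "(w, y') \<in> dedges G" and wy: "w \<notin> sc G y"
      unfolding acy_edge by blast
    have jb: "\<forall>p. jo G True Z y s' Bwd p"
    proof
      fix p show "jo G True Z y s' Bwd p"
        by (rule jB[OF r ows.hyps(4) st']) (use Bwd in auto)
    qed
    have "(y', y) \<in> (dedges G)\<^sup>*" "(y, y') \<in> (dedges G)\<^sup>*" using y'(1) unfolding sc_iff by auto
    then obtain s1 where s1: "ow G True Z x y' s1" "(y' = y \<and> s1 = s') \<or> s1 = Some (False, False)"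
      using bwd_chain[OF E o' jb] by blast
    have j2: "jo G True Z y' s1 Bwd w"
    proof (cases "y' = y \<and> s1 = s'")
      case True then show ?thesis using jb by simp
    next
      case False then have "s1 = Some (False, False)" using s1(2) by blast
      then show ?thesis by (simp add: jo_def jok_def)
    qed
    have e2: "edge_ok G y' Bwd w" using y'(2) by (simp add: edge_ok_def)
    have wn: "w \<in> nodes G" using ows.hyps(3) by simp
    have o2: "ow G True Z x w (Some (False, y' \<notin> sc G w))"
      using ow.ows[OF s1(1) e2 wn j2] by (simp add: head_at_end_def)
    have "relB (Some (False, y' \<notin> sc G w)) (Some (head_at_end k, k = Bwd \<and> y \<notin> sc (acy G) w))"
      using Bwd by (simp add: relB_def head_at_end_def)
    then show ?thesis using o2 by blast
  next
    case Bi
    then have yw: "y \<noteq> w" "{y, w} \<in> hedges (acy G)" using ows.hyps(2) by (auto simp: edge_ok_def)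
    then obtain F where F: "F \<in> hedges G" "{y, w} \<subseteq> (\<Union>v\<in>F. sc G v)" unfolding acy_hedge by blast
    then have "y \<in> (\<Union>v\<in>F. sc G v)" "w \<in> (\<Union>v\<in>F. sc G v)" by auto
    then obtain a0 b0 where ab: "a0 \<in> F" "y \<in> sc G a0" "b0 \<in> F" "w \<in> sc G b0" by auto
    have "hedges G \<subseteq> Pow (nodes G)" using wf unfolding wf_hedg_def by simp
    then have Fn: "F \<subseteq> nodes G" using F(1) by auto
    have jb: "\<forall>p. jo G True Z y s' Bwd p"
    proof
      fix p show "jo G True Z y s' Bwd p"
        by (rule jB[OF r ows.hyps(4) st']) (use Bi in auto)
    qed
    have a0y: "a0 \<in> sc G y" using ab(2) sc_sym by metis
    then have "(a0, y) \<in> (dedges G)\<^sup>*" "(y, a0) \<in> (dedges G)\<^sup>*" unfolding sc_iff by auto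
    then obtain s1 where s1: "ow G True Z x a0 s1" "(a0 = y \<and> s1 = s') \<or> s1 = Some (False, False)"
      using bwd_chain[OF E o' jb] by blast
    have rA: "relB s2 (Some (head_at_end k, k = Bwd \<and> y \<notin> sc (acy G) w))"
      if "s2 = Some (True, False) \<or> s2 = Some (False, False)" for s2
      using that Bi by (auto simp: relB_def head_at_end_def)
    show ?thesis
    proof (cases "a0 = b0")
      case False
      have sub: "\<forall>F\<in>hedges G. \<forall>F'. F' \<subseteq> F \<longrightarrow> F' \<in> hedges G" using wf by (rule wf_subcl)
      have "{a0, b0} \<subseteq> F" using ab(1,3) by simp
      then have "{a0, b0} \<in> hedges G" using sub F(1) by blast
      then have e2: "edge_ok G a0 Bi b0" using False by (simp add: edge_ok_def)
      have n2: "b0 \<in> nodes G" using ab(3) Fn by auto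
      have j2: "jo G True Z a0 s1 Bi b0"
      proof (cases "a0 = y \<and> s1 = s'")
        case True then show ?thesis
          using jB[OF r ows.hyps(4) st', of Bi b0] Bi by auto
      next
        case False then have "s1 = Some (False, False)" using s1(2) by blast
        then show ?thesis by (simp add: jo_def jok_def)
      qed
      have o2: "ow G True Z x b0 (Some (True, False))"
        using ow.ows[OF s1(1) e2 n2 j2] by (simp add: head_at_end_def)
      have jc: "\<forall>p. p \<in> sc G b0 \<longrightarrow> jo G True Z b0 (Some (True, False)) Fwd p"
        by (simp add: jo_def jok_def head_at_start_def)
      have "(b0, w) \<in> (dedges G)\<^sup>*" "(w, b0) \<in> (dedges G)\<^sup>*" using ab(4) unfolding sc_iff by auto
      then obtain s3 where s3: "ow G True Z x w s3" "(w = b0 \<and> s3 = Some (True, False)) \<or> s3 = Some (True, False)"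
        using fwd_chain2[OF E o2 jc] by blast
      then have "s3 = Some (True, False)" by auto
      then show ?thesis using s3(1) rA by blast
    next
      case True
      have jc: "\<forall>p. p \<in> sc G a0 \<longrightarrow> jo G True Z a0 s1 Fwd p"
      proof (intro allI impI)
        fix p assume p: "p \<in> sc G a0"
        show "jo G True Z a0 s1 Fwd p"
        proof (cases "a0 = y \<and> s1 = s'")
          case True then show ?thesis
            using jB[OF r ows.hyps(4) st', of Fwd p] Bi p by auto
        next
          case False then have "s1 = Some (False, False)" using s1(2) by blast
          then show ?thesis using p by (simp add: jo_def jok_def)
        qed
      qed
      have "(a0, w) \<in> (dedges G)\<^sup>*" "(w, a0) \<in> (dedges G)\<^sup>*" using ab(4) True unfolding sc_iff by auto
      then obtain s3 where s3: "ow G True Z x w s3" "(w = a0 \<and> s3 = s1) \<or> s3 = Some (True, False)"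
        using fwd_chain2[OF E s1(1) jc] by blast
      have "s3 = Some (True, False) \<or> s3 = Some (False, False)"
      proof (cases "s3 = Some (True, False)")
        case False
        then have "w = a0" "s3 = s1" using s3(2) by auto
        then have "a0 \<noteq> y" using yw(1) by simp
        then have "s1 = Some (False, False)" using s1(2) by auto
        then show ?thesis using \<open>s3 = s1\<close> by simp
      qed simp
      then show ?thesis using s3(1) rA by blast
    qed
  qed
qed

lemma osep_acy_to_G:
  assumes "wf_hedg G" "osep G True X Y Z" shows "osep (acy G) False X Y Z"
  unfolding osep_def
proof (intro allI impI notI)
  fix x y s assume a: "x \<in> X" "y \<in> Y" "x \<notin> Z" "y \<notin> Z" "ow (acy G) False Z x y s"
  from acy_to_G[OF assms(1) a(5)] obtain s' where "ow G True Z x y s'" by blast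
  moreover have "\<not> ow G True Z x y s'" using assms(2) a(1-4) unfolding osep_def by simp
  ultimately show False by simp
qed



section \<open>Direction: G to acyclification\<close>

definition modeT :: "'a hedg \<Rightarrow> 'a set \<Rightarrow> 'a \<Rightarrow> 'a \<Rightarrow> (bool \<times> bool) option \<Rightarrow> bool" where
  "modeT G Z x y sG \<longleftrightarrow> (\<exists>e sA. e \<in> sc G y \<and> ow (acy G) False Z x e sA
     \<and> (sA = None \<or> (\<exists>ob. sA = Some (False, ob)))
     \<and> (sA \<noteq> None \<longrightarrow> e \<notin> Z \<or> (e = y \<and> (\<exists>a. sG = Some (a, True))))
     \<and> (sG = None \<longrightarrow> e = y \<and> sA = None))"

definition modeH :: "'a hedg \<Rightarrow> 'a set \<Rightarrow> 'a \<Rightarrow> 'a \<Rightarrow> (bool \<times> bool) option \<Rightarrow> bool" where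
  "modeH G Z x y sG \<longleftrightarrow> sG \<noteq> None
     \<and> ((\<exists>r\<in>sc G y. r \<in> anc_set (acy G) Z) \<or> (\<exists>ob. sG = Some (True, ob)))
     \<and> (\<forall>r\<in>sc G y. \<exists>ob. ow (acy G) False Z x r (Some (True, ob)))"

lemma walk_into:
  assumes "ow (acy G) False Z x u sU" "edge_ok (acy G) u k r" "r \<in> nodes G" "jo (acy G) False Z u sU k r"
  shows "ow (acy G) False Z x r (Some (head_at_end k, k = Bwd \<and> u \<notin> sc (acy G) r))"
  using ow.ows[OF assms(1,2)] assms(3,4) by simp

lemma stepA:
  assumes wf: "wf_hedg G" and oG: "ow G True Z x y sG" and eG: "edge_ok G y k n" and nn: "n \<in> nodes G"
    and jG: "jo G True Z y sG k n" and inv: "modeT G Z x y sG \<or> modeH G Z x y sG"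
  shows "modeT G Z x n (Some (head_at_end k, k = Bwd \<and> y \<notin> sc G n))
       \<or> modeH G Z x n (Some (head_at_end k, k = Bwd \<and> y \<notin> sc G n))"
    (is "modeT G Z x n ?s' \<or> modeH G Z x n ?s'")
proof -
  have st: "\<forall>a ob. sG = Some (a, ob) \<longrightarrow> ob \<longrightarrow> \<not> a" using ow_state[OF oG] by blast
  have yn: "y \<in> nodes G" using ow_nodes[OF oG] by simp
  have F1': "y \<notin> Z" if "sG = Some (a, True)" for a
  proof -
    have "\<not> a" using st[rule_format, of a True] that by simp
    then show ?thesis using F1[of G Z y a k n] jG that by simp
  qed
  show ?thesis
  proof (cases "n \<in> sc G y")
    case True
    have scn: "sc G n = sc G y" using True by (rule sc_eq)
    show ?thesis
    proof (cases "modeT G Z x y sG")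
      case True
      then obtain e sA where T: "e \<in> sc G y" "ow (acy G) False Z x e sA"
        "sA = None \<or> (\<exists>ob. sA = Some (False, ob))"
        "sA \<noteq> None \<longrightarrow> e \<notin> Z \<or> (e = y \<and> (\<exists>a. sG = Some (a, True)))"
        unfolding modeT_def by blast
      have "sA \<noteq> None \<longrightarrow> e \<notin> Z" using T(4) F1' by blast
      then have "modeT G Z x n ?s'" unfolding modeT_def using T(1-3) scn by auto
      then show ?thesis by simp
    next
      case False
      then have H: "modeH G Z x y sG" using inv by simp
      then have H1: "sG \<noteq> None" and H2: "(\<exists>r\<in>sc G y. r \<in> anc_set (acy G) Z) \<or> (\<exists>ob. sG = Some (True, ob))"
        and H3: "\<forall>r\<in>sc G y. \<exists>ob. ow (acy G) False Z x r (Some (True, ob))"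
        unfolding modeH_def by blast+
      have R: "(\<exists>r\<in>sc G y. r \<in> anc_set (acy G) Z) \<or> (\<exists>ob. ?s' = Some (True, ob))"
      proof (cases "\<exists>r\<in>sc G y. r \<in> anc_set (acy G) Z")
        case False
        then obtain ob where sg: "sG = Some (True, ob)" using H2 by blast
        show ?thesis
        proof (cases "head_at_start k")
          case True
          then have "y \<in> anc_set G Z" using F3[of G Z y ob k n] jG sg by simp
          from rep_anc[OF this] show ?thesis by (rule disjI1)
        next
          case False
          then have "k = Fwd" using not_has_Fwd by blast
          then show ?thesis by (auto simp add: head_at_end_def)
        qed
      qed simp
      have "modeH G Z x n ?s'" unfolding modeH_def using R H3 scn by simp
      then show ?thesis by simp
    qed
  next
    case False
    note cross = False
    have ny: "y \<notin> sc G n" using False sc_sym by metis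
    have headside: "\<exists>u sU. u \<in> sc G y \<and> ow (acy G) False Z x u sU \<and> jo (acy G) False Z u sU k' r"
      if hk: "head_at_start k'" and hk2: "head_at_start k" for k' r
    proof (cases "modeT G Z x y sG")
      case True
      then obtain e sA where T: "e \<in> sc G y" "ow (acy G) False Z x e sA"
        "sA = None \<or> (\<exists>ob. sA = Some (False, ob))"
        "sA \<noteq> None \<longrightarrow> e \<notin> Z \<or> (e = y \<and> (\<exists>a. sG = Some (a, True)))"
        unfolding modeT_def by blast
      have j: "jo (acy G) False Z e sA k' r"
      proof (cases sA)
        case (Some q)
        then obtain ob where q: "sA = Some (False, ob)" using T(3) by blast
        have "e \<notin> Z" using T(4) F1' q by blast
        then show ?thesis using q jA3 by metis
      qed (simp add: jo_def)
      show ?thesis using T(1,2) j by blast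
    next
      case False
      then have H: "modeH G Z x y sG" using inv by simp
      then have H2: "(\<exists>r\<in>sc G y. r \<in> anc_set (acy G) Z) \<or> (\<exists>ob. sG = Some (True, ob))"
        and H3: "\<forall>r\<in>sc G y. \<exists>ob. ow (acy G) False Z x r (Some (True, ob))"
        unfolding modeH_def by blast+
      have "\<exists>r\<in>sc G y. r \<in> anc_set (acy G) Z"
      proof (cases "\<exists>r\<in>sc G y. r \<in> anc_set (acy G) Z")
        case False
        then obtain ob where sg: "sG = Some (True, ob)" using H2 by blast
        then have "y \<in> anc_set G Z" using F3[of G Z y ob k n] jG hk2 by simp
        from rep_anc[OF this] show ?thesis .
      qed simp
      then obtain u where u: "u \<in> sc G y" "u \<in> anc_set (acy G) Z" by blast
      then obtain ob where "ow (acy G) False Z x u (Some (True, ob))" using H3 by blast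
      moreover have "jo (acy G) False Z u (Some (True, ob)) k' r" using jA4[OF u(2) hk] .
      ultimately show ?thesis using u(1) by blast
    qed
    show ?thesis
    proof (cases k)
      case Fwd
      have eyn: "(y, n) \<in> dedges G" using eG Fwd by (simp add: edge_ok_def)
      have s'v: "?s' = Some (True, False)" using Fwd by (simp add: head_at_end_def)
      have yZ: "sG \<noteq> None \<Longrightarrow> y \<notin> Z" using F2[of G Z y sG n] jG Fwd cross by simp
      have wy: "\<exists>sY. ow (acy G) False Z x y sY \<and> (\<forall>r. jo (acy G) False Z y sY Fwd r)"
      proof (cases "modeT G Z x y sG")
        case True
        then obtain e sA where T: "e \<in> sc G y" "ow (acy G) False Z x e sA"
          "sA = None \<or> (\<exists>ob. sA = Some (False, ob))"
          "sA \<noteq> None \<longrightarrow> e \<notin> Z \<or> (e = y \<and> (\<exists>a. sG = Some (a, True)))"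
          "sG = None \<longrightarrow> e = y \<and> sA = None"
          unfolding modeT_def by blast
        show ?thesis
        proof (cases "e = y")
          case True
          have "\<forall>r. jo (acy G) False Z y sA Fwd r"
          proof (cases sA)
            case (Some q)
            then obtain ob where q: "sA = Some (False, ob)" using T(3) by blast
            have "sG \<noteq> None" using T(5) Some by auto
            then have "y \<notin> Z" using yZ by simp
            then show ?thesis using q jA3 by metis
          qed (simp add: jo_def)
          then show ?thesis using T(2) True by blast
        next
          case False
          have sGn: "sG \<noteq> None" using T(5) False by auto
          have "{y} \<in> hedges G" using wf yn unfolding wf_hedg_def by blast
          then have "{e, y} \<in> hedges (acy G)" using AH1[of "{y}" G y y e y] T(1) sc_refl[of y G] by simp
          then have ee: "edge_ok (acy G) e Bi y" using False by (simp add: edge_ok_def)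
          have je: "jo (acy G) False Z e sA Bi y"
          proof (cases sA)
            case (Some q)
            then obtain ob where q: "sA = Some (False, ob)" using T(3) by blast
            have "e \<notin> Z" using T(4) False q by blast
            then show ?thesis using q jA3 by metis
          qed (simp add: jo_def)
          have o2: "ow (acy G) False Z x y (Some (True, Bi = Bwd \<and> e \<notin> sc (acy G) y))"
            using walk_into[OF T(2) ee yn je] by (simp add: head_at_end_def)
          have "\<forall>r. jo (acy G) False Z y (Some (True, Bi = Bwd \<and> e \<notin> sc (acy G) y)) Fwd r"
            using yZ[OF sGn] jA2 not_has_Fwd by metis
          then show ?thesis using o2 by blast
        qed
      next
        case False
        then have H: "modeH G Z x y sG" using inv by simp
        then have "sG \<noteq> None" and H3: "\<forall>r\<in>sc G y. \<exists>ob. ow (acy G) False Z x r (Some (True, ob))"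
          unfolding modeH_def by blast+
        then have yZ': "y \<notin> Z" using yZ by simp
        obtain ob where "ow (acy G) False Z x y (Some (True, ob))" using H3 sc_refl[of y G] by blast
        moreover have "\<forall>r. jo (acy G) False Z y (Some (True, ob)) Fwd r" using yZ' jA2 not_has_Fwd by metis
        ultimately show ?thesis by blast
      qed
      then obtain sY where sY: "ow (acy G) False Z x y sY" "\<forall>r. jo (acy G) False Z y sY Fwd r" by blast
      have "\<forall>r\<in>sc G n. \<exists>ob. ow (acy G) False Z x r (Some (True, ob))"
      proof
        fix r assume r: "r \<in> sc G n"
        have "(y, r) \<in> dedges (acy G)" using AE2[OF eyn cross r] .
        then have er: "edge_ok (acy G) y Fwd r" by (simp add: edge_ok_def)
        have rn: "r \<in> nodes G" using sc_nodes[OF wf nn r] .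
        show "\<exists>ob. ow (acy G) False Z x r (Some (True, ob))"
          using walk_into[OF sY(1) er rn] sY(2) by (auto simp add: head_at_end_def)
      qed
      then have "modeH G Z x n ?s'" unfolding modeH_def s'v by auto
      then show ?thesis by simp
    next
      case Bi
      have s'v: "?s' = Some (True, False)" using Bi by (simp add: head_at_end_def)
      have hyn: "{y, n} \<in> hedges G" using eG Bi by (simp add: edge_ok_def)
      have "\<forall>r\<in>sc G n. \<exists>ob. ow (acy G) False Z x r (Some (True, ob))"
      proof
        fix r assume r: "r \<in> sc G n"
        obtain u sU where u: "u \<in> sc G y" "ow (acy G) False Z x u sU" "jo (acy G) False Z u sU Bi r"
          using headside[of Bi r] Bi by (auto simp: head_at_start_def)
        have "{u, r} \<in> hedges (acy G)" using AH1[OF hyn _ _ u(1) r] by simp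
        moreover have "u \<noteq> r" using sc_other[OF cross u(1) r] .
        ultimately have er: "edge_ok (acy G) u Bi r" by (simp add: edge_ok_def)
        have rn: "r \<in> nodes G" using sc_nodes[OF wf nn r] .
        show "\<exists>ob. ow (acy G) False Z x r (Some (True, ob))"
          using walk_into[OF u(2) er rn u(3)] by (auto simp add: head_at_end_def)
      qed
      then have "modeH G Z x n ?s'" unfolding modeH_def s'v by auto
      then show ?thesis by simp
    next
      case Bwd
      have s'v: "?s' = Some (False, True)" using Bwd ny by (simp add: head_at_end_def)
      have eny: "(n, y) \<in> dedges G" using eG Bwd by (simp add: edge_ok_def)
      obtain u sU where u: "u \<in> sc G y" "ow (acy G) False Z x u sU" "jo (acy G) False Z u sU Bwd n"
        using headside[of Bwd n] Bwd by (auto simp: head_at_start_def)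
      have "(n, u) \<in> dedges (acy G)" using AE1[OF cross eny u(1)] .
      then have er: "edge_ok (acy G) u Bwd n" by (simp add: edge_ok_def)
      have o2: "ow (acy G) False Z x n (Some (False, Bwd = Bwd \<and> u \<notin> sc (acy G) n))"
        using walk_into[OF u(2) er nn u(3)] by (simp add: head_at_end_def)
      have "modeT G Z x n ?s'" unfolding modeT_def s'v
        by (rule exI[of _ n], rule exI[of _ "Some (False, Bwd = Bwd \<and> u \<notin> sc (acy G) n)"])
           (use o2 sc_refl[of n G] in auto)
      then show ?thesis by simp
    qed
  qed
qed

lemma G_to_acy:
  assumes wf: "wf_hedg G"
  shows "ow G True Z x y sG \<Longrightarrow> modeT G Z x y sG \<or> modeH G Z x y sG"
proof (induction rule: ow.induct)
  case (owb x)
  have "ow (acy G) False Z x x None" using owb by (simp add: ow.owb)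
  then have "modeT G Z x x None" unfolding modeT_def using sc_refl[of x G] by blast
  then show ?case by simp
next
  case (ows x y s k w)
  show ?case by (rule stepA[OF wf ows.hyps(1-4) ows.IH])
qed

lemma osep_G_to_acy:
  assumes wf: "wf_hedg G" and sep: "osep (acy G) False X Y Z" shows "osep G True X Y Z"
  unfolding osep_def
proof (intro allI impI notI)
  fix x y s assume a: "x \<in> X" "y \<in> Y" "x \<notin> Z" "y \<notin> Z" "ow G True Z x y s"
  have yn: "y \<in> nodes G" using ow_nodes[OF a(5)] by simp
  have "\<exists>s'. ow (acy G) False Z x y s'"
  proof (cases "modeT G Z x y s")
    case True
    then obtain e sA where T: "e \<in> sc G y" "ow (acy G) False Z x e sA"
      "sA = None \<or> (\<exists>ob. sA = Some (False, ob))"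
      "sA \<noteq> None \<longrightarrow> e \<notin> Z \<or> (e = y \<and> (\<exists>a. s = Some (a, True)))"
      unfolding modeT_def by blast
    show ?thesis
    proof (cases "e = y")
      case True then show ?thesis using T(2) by blast
    next
      case False
      have "{y} \<in> hedges G" using wf yn unfolding wf_hedg_def by blast
      then have "{e, y} \<in> hedges (acy G)" using AH1[of "{y}" G y y e y] T(1) sc_refl[of y G] by simp
      then have ee: "edge_ok (acy G) e Bi y" using False by (simp add: edge_ok_def)
      have je: "jo (acy G) False Z e sA Bi y"
      proof (cases sA)
        case (Some q)
        then obtain ob where q: "sA = Some (False, ob)" using T(3) by blast
        have "e \<notin> Z" using T(4) False q by blast
        then show ?thesis using q jA3 by metis
      qed (simp add: jo_def)
      show ?thesis using walk_into[OF T(2) ee yn je] by blast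
    qed
  next
    case False
    then have "modeH G Z x y s" using G_to_acy[OF wf a(5)] by simp
    then have "\<forall>r\<in>sc G y. \<exists>ob. ow (acy G) False Z x r (Some (True, ob))" unfolding modeH_def by blast
    then show ?thesis using sc_refl[of y G] by blast
  qed
  then obtain s' where "ow (acy G) False Z x y s'" by blast
  moreover have "\<not> ow (acy G) False Z x y s'" using sep a(1-4) unfolding osep_def by simp
  ultimately show False by simp
qed



section \<open>acag\<close>

lemma acag_nodes: "nodes (acag G) = nodes (acy (aug G))" unfolding acag_def by simp
lemma acag_edges: "dedges (acag G) = dedges (acy (aug G))" unfolding acag_def by simp
lemma acag_hedges: "hedges (acag G) = singleton_complex (nodes (acy (aug G)))" unfolding acag_def by simp

lemma same_edges_sc: "dedges H1 = dedges H2 \<Longrightarrow> sc H1 = sc H2"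
  unfolding sc_def anc_def desc_def by simp

lemma same_edges_anc: "dedges H1 = dedges H2 \<Longrightarrow> anc_set H1 = anc_set H2"
  unfolding anc_set_def anc_def by simp

lemma sc_acag: "sc (acag G) = sc (acy (aug G))" using same_edges_sc[OF acag_edges] .
lemma anc_acag: "anc_set (acag G) = anc_set (acy (aug G))" using same_edges_anc[OF acag_edges] .

lemma jo_acag: "jo (acag G) sig Z v s k w = jo (acy (aug G)) sig Z v s k w"
  unfolding jo_def jok_def sc_acag anc_acag ..

lemma acag_not_bi: "\<not> edge_ok (acag G) a Bi b"
  unfolding edge_ok_def acag_hedges singleton_complex_def by auto

lemma acag_to_D: "ow (acag G) sig Z a b s \<Longrightarrow> ow (acy (aug G)) sig Z a b s"
proof (induction rule: ow.induct)
  case (owb x)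
  then show ?case by (simp add: acag_nodes ow.owb)
next
  case (ows x y s k w)
  have "k \<noteq> Bi" using ows.hyps(2) acag_not_bi by metis
  then have e: "edge_ok (acy (aug G)) y k w" using ows.hyps(2)
    by (cases k) (auto simp: edge_ok_def acag_edges)
  have n: "w \<in> nodes (acy (aug G))" using ows.hyps(3) by (simp add: acag_nodes)
  have j: "jo (acy (aug G)) sig Z y s k w" using ows.hyps(4) by (simp add: jo_acag)
  show ?case using ow.ows[OF ows.IH e n j] by (simp add: sc_acag)
qed

lemma D_bi:
  assumes "{a, b} \<in> hedges (acy (aug G))" "a \<noteq> b"
  shows "\<exists>y w. a = Inl y \<and> b = Inl w \<and> w \<in> sc G y"
proof -
  obtain F where F: "F \<in> hedges (aug G)" "{a, b} \<subseteq> (\<Union>v\<in>F. sc (aug G) v)"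
    using assms(1) unfolding acy_hedge by blast
  then have sF: "\<forall>u\<in>F. \<forall>v\<in>F. u = v" unfolding aug_hedges singleton_complex_def by blast
  obtain u where u: "u \<in> F" "a \<in> sc (aug G) u" using F(2) by blast
  obtain u' where u': "u' \<in> F" "b \<in> sc (aug G) u'" using F(2) by blast
  have "u' = u" using sF u(1) u'(1) by blast
  then have ab: "a \<in> sc (aug G) u" "b \<in> sc (aug G) u" using u u' by auto
  show ?thesis
  proof (cases u)
    case (Inl u0)
    then obtain y w where yw: "a = Inl y" "y \<in> sc G u0" "b = Inl w" "w \<in> sc G u0"
      using ab by (auto simp: sc_aug_Inl)
    have "u0 \<in> sc G y" using yw(2) sc_sym by metis
    then have "w \<in> sc G y" using yw(4) sc_eq by metis
    then show ?thesis using yw by blast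
  next
    case (Inr F0)
    then have "a = Inr F0" "b = Inr F0" using ab by (auto simp: sc_aug_Inr)
    then show ?thesis using assms(2) by simp
  qed
qed

lemma D_to_acag:
  assumes wf: "wf_hedg G"
  shows "ow (acy (aug G)) False (Inl ` Z) a b s \<Longrightarrow> ow (acag G) False (Inl ` Z) a b s"
proof (induction rule: ow.induct)
  case (owb x)
  then show ?case by (simp add: acag_nodes ow.owb)
next
  case (ows x y s k w)
  have n: "w \<in> nodes (acag G)" using ows.hyps(3) by (simp add: acag_nodes)
  show ?case
  proof (cases "k = Bi")
    case False
    then have e: "edge_ok (acag G) y k w" using ows.hyps(2)
      by (cases k) (auto simp: edge_ok_def acag_edges)
    have j: "jo (acag G) False (Inl ` Z) y s k w" using ows.hyps(4) by (simp add: jo_acag)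
    show ?thesis using ow.ows[OF ows.IH e n j] by (simp add: sc_acag)
  next
    case True
    then have h: "{y, w} \<in> hedges (acy (aug G))" "y \<noteq> w" using ows.hyps(2) by (auto simp: edge_ok_def)
    obtain y0 w0 where yw: "y = Inl y0" "w = Inl w0" "w0 \<in> sc G y0" using D_bi[OF h] by blast
    have "Inl y0 \<in> nodes (aug G)" using ow_nodes[OF ows.hyps(1)] yw(1) by simp
    then have y0n: "y0 \<in> nodes G" by (auto simp: aug_nodes)
    have "{y0} \<in> hedges G" using wf y0n unfolding wf_hedg_def by blast
    then obtain F where F: "F \<in> maxhedges G" "{y0} \<subseteq> F" using max_hedge_ex[OF wf_fin_hedges[OF wf]] by blast
    have yF: "y0 \<in> F" using F(2) by simp
    have e1D: "(Inr F, Inl y0) \<in> dedges (acy (aug G))"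
      unfolding acy_edge sc_aug_Inl using F(1) yF sc_refl[of y0 G] by auto
    have y0w: "y0 \<in> sc G w0" using yw(3) sc_sym by metis
    have e2D: "(Inr F, Inl w0) \<in> dedges (acy (aug G))"
      unfolding acy_edge sc_aug_Inl using F(1) yF y0w by auto
    have e1: "edge_ok (acag G) y Bwd (Inr F)" using e1D yw by (simp add: edge_ok_def acag_edges)
    have e2: "edge_ok (acag G) (Inr F) Fwd w" using e2D yw by (simp add: edge_ok_def acag_edges)
    have nF: "Inr F \<in> nodes (acag G)" using F(1) by (simp add: acag_nodes aug_nodes)
    have j0: "jo (acy (aug G)) False (Inl ` Z) y s Bwd (Inr F)"
      using ows.hyps(4) True by (cases s) (auto simp: jo_def jok_def head_at_start_def)
    then have j1: "jo (acag G) False (Inl ` Z) y s Bwd (Inr F)" by (simp add: jo_acag)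
    note o1 = ow.ows[OF ows.IH e1 nF j1]
    have j2: "jo (acag G) False (Inl ` Z) (Inr F) (Some (head_at_end Bwd, Bwd = Bwd \<and> y \<notin> sc (acag G) (Inr F))) Fwd w"
      by (auto simp: jo_def jok_def head_at_end_def)
    show ?thesis using ow.ows[OF o1 e2 n j2] True by (simp add: head_at_end_def)
  qed
qed

lemma osep_acag:
  assumes wf: "wf_hedg G"
  shows "osep (acag G) False (Inl ` X) (Inl ` Y) (Inl ` Z) \<longleftrightarrow> osep (acy (aug G)) False (Inl ` X) (Inl ` Y) (Inl ` Z)"
  unfolding osep_def using acag_to_D D_to_acag[OF wf] by metis

theorem mainTheorem7:
  fixes G :: "'a hedg" and X Y Z :: "'a set"
  assumes "wf_hedg G"
    and "X \<subseteq> nodes G" and "Y \<subseteq> nodes G" and "Z \<subseteq> nodes G"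
  shows "(sigma_sep G X Y Z \<longleftrightarrow> sigma_sep (aug G) (Inl ` X) (Inl ` Y) (Inl ` Z))
    \<and> (sigma_sep G X Y Z \<longleftrightarrow> d_sep (acy G) X Y Z)
    \<and> (sigma_sep G X Y Z \<longleftrightarrow> d_sep (acag G) (Inl ` X) (Inl ` Y) (Inl ` Z))
    \<and> (sigma_sep G X Y Z \<longleftrightarrow> d_sep (acy (aug G)) (Inl ` X) (Inl ` Y) (Inl ` Z))
    \<and> (sigma_sep G X Y Z \<longleftrightarrow> d_sep (aug (acy G)) (Inl ` X) (Inl ` Y) (Inl ` Z))"
proof -
  note wf = assms(1)
  have wa: "wf_hedg (aug G)" using wf_aug[OF wf] .
  have wc: "wf_hedg (acy G)" using wf_acy[OF wf] .
  have iii: "osep H True X' Y' Z' \<longleftrightarrow> osep (acy H) False X' Y' Z'" if "wf_hedg H" for H :: "'b hedg" and X' Y' Z'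
    using osep_acy_to_G[OF that] osep_G_to_acy[OF that] by metis
  have ii: "osep (aug G) True (Inl ` X) (Inl ` Y) (Inl ` Z) \<longleftrightarrow> osep G True X Y Z"
    using osep_aug[OF wf_fin_hedges[OF wf] wf_subcl[OF wf]] .
  have iii_G: "osep G True X Y Z \<longleftrightarrow> osep (acy G) False X Y Z" using iii[OF wf] .
  have v: "osep (acy (aug G)) False (Inl ` X) (Inl ` Y) (Inl ` Z) \<longleftrightarrow> osep G True X Y Z"
    using iii[OF wa] ii by simp
  have iv: "osep (acag G) False (Inl ` X) (Inl ` Y) (Inl ` Z) \<longleftrightarrow> osep G True X Y Z"
    using osep_acag[OF wf] v by simp
  have vi: "osep (aug (acy G)) False (Inl ` X) (Inl ` Y) (Inl ` Z) \<longleftrightarrow> osep G True X Y Z"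
    using osep_aug[OF wf_fin_hedges[OF wc] wf_subcl[OF wc]] iii_G by simp
  show ?thesis
    unfolding sigma_sep_osep d_sep_osep using ii iii_G iv v vi by simp
qed

end
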